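(* Let $h_1\subsetneq h_2^*$ be strongly separated half-spaces. Then for $i=1,2$ the set $h_i\cap B(h_1,h_2)$ consists of a single vertex $x_i$, and $B(h_1,h_2)=\mathcal I(x_1,x_2)$. Moreover the half-spaces separating points of $B(h_1,h_2)$ are exactly those $h$ with $h_1\subseteq h\subseteq h_2^*$ or $h_1\subseteq h^*\subseteq h_2^*$.
   Context: $X$ is a finite-dimensional CAT(0) cube complex identified with its vertex set, $\mathfrak H$ its set of half-spaces, $h^*=X\setminus h$, $U_v=\{h:v\in h\}$. Transverse ($\pitchfork$): $h\cap k,h\cap k^*,h^*\cap k,h^*\cap k^*$ all nonempty; strongly separated: no half-space transverse to both. Write $\hat a\subset b$ if $a\subsetneq b$ or $a^*\subsetneq b$. For $h_1\subsetneq h_2^*$, $\beta(h_1,h_2)$ is the set of $h$ with ($\hat h_1\subset h$ and $h\pitchfork h_2$) or ($\hat h_2\subset h$ and $h\pitchfork h_1$) or ($\hat h_1\subset h$ and $\hat h_2\subset h$); the bridge is $B(h_1,h_2)=\{x\in X: x\in h\ \forall h\in\beta(h_1,h_2)\}$. For vertices $v,w$, $\mathcal I(v,w)=\{m\in X:U_v\cap U_w\subset U_m\}$. *)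

theory Defs
  imports Main
begin

text \<open>A CAT(0) cube complex is modelled by its 1-skeleton, which is a median graph
  (Chepoi / Roller / Gerasimov).  Vertices form a set V, edges a symmetric irreflexive
  relation E on V.\<close>

definition walk :: "('a \<Rightarrow> 'a \<Rightarrow> bool) \<Rightarrow> 'a \<Rightarrow> 'a \<Rightarrow> nat \<Rightarrow> bool" where
  "walk E u v n \<longleftrightarrow> (\<exists>p::nat \<Rightarrow> 'a. p 0 = u \<and> p n = v \<and> (\<forall>i<n. E (p i) (p (Suc i))))"

definition gdist :: "('a \<Rightarrow> 'a \<Rightarrow> bool) \<Rightarrow> 'a \<Rightarrow> 'a \<Rightarrow> nat" where
  "gdist E u v = (LEAST n. walk E u v n)"

definition ginterval :: "('a \<Rightarrow> 'a \<Rightarrow> bool) \<Rightarrow> 'a set \<Rightarrow> 'a \<Rightarrow> 'a \<Rightarrow> 'a set" where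
  "ginterval E V u v = {m \<in> V. gdist E u m + gdist E m v = gdist E u v}"

definition median_graph :: "'a set \<Rightarrow> ('a \<Rightarrow> 'a \<Rightarrow> bool) \<Rightarrow> bool" where
  "median_graph V E \<longleftrightarrow>
     (\<forall>u v. E u v \<longrightarrow> u \<in> V \<and> v \<in> V) \<and>
     (\<forall>u v. E u v \<longrightarrow> E v u) \<and> (\<forall>u. \<not> E u u) \<and>
     (\<forall>u\<in>V. \<forall>v\<in>V. \<exists>n. walk E u v n) \<and>
     (\<forall>u\<in>V. \<forall>v\<in>V. \<forall>w\<in>V. \<exists>!m.
        m \<in> ginterval E V u v \<and> m \<in> ginterval E V v w \<and> m \<in> ginterval E V u w)"

definition halfspaces :: "'a set \<Rightarrow> ('a \<Rightarrow> 'a \<Rightarrow> bool) \<Rightarrow> 'a set set" where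
  "halfspaces V E = {{x \<in> V. gdist E x u < gdist E x v} | u v. u \<in> V \<and> v \<in> V \<and> E u v}"

definition transverse :: "'a set \<Rightarrow> 'a set \<Rightarrow> 'a set \<Rightarrow> bool" where
  "transverse V h k \<longleftrightarrow> h \<inter> k \<noteq> {} \<and> h \<inter> (V - k) \<noteq> {} \<and>
                           (V - h) \<inter> k \<noteq> {} \<and> (V - h) \<inter> (V - k) \<noteq> {}"

definition finite_dim :: "'a set \<Rightarrow> ('a \<Rightarrow> 'a \<Rightarrow> bool) \<Rightarrow> bool" where
  "finite_dim V E \<longleftrightarrow> (\<exists>n::nat. \<forall>F \<subseteq> halfspaces V E.
      (\<forall>h\<in>F. \<forall>k\<in>F. h \<noteq> k \<longrightarrow> transverse V h k) \<longrightarrow> finite F \<and> card F \<le> n)"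

definition strongly_separated :: "'a set \<Rightarrow> ('a \<Rightarrow> 'a \<Rightarrow> bool) \<Rightarrow> 'a set \<Rightarrow> 'a set \<Rightarrow> bool" where
  "strongly_separated V E h k \<longleftrightarrow>
     \<not> (\<exists>l \<in> halfspaces V E. transverse V l h \<and> transverse V l k)"

definition hatsub :: "'a set \<Rightarrow> 'a set \<Rightarrow> 'a set \<Rightarrow> bool" where
  "hatsub V a b \<longleftrightarrow> a \<subset> b \<or> (V - a) \<subset> b"

definition bridge_set :: "'a set \<Rightarrow> ('a \<Rightarrow> 'a \<Rightarrow> bool) \<Rightarrow> 'a set \<Rightarrow> 'a set \<Rightarrow> 'a set set" where
  "bridge_set V E h1 h2 = {h \<in> halfspaces V E.
      (hatsub V h1 h \<and> transverse V h h2) \<or> (hatsub V h2 h \<and> transverse V h h1) \<or>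
      (hatsub V h1 h \<and> hatsub V h2 h)}"

definition bridge :: "'a set \<Rightarrow> ('a \<Rightarrow> 'a \<Rightarrow> bool) \<Rightarrow> 'a set \<Rightarrow> 'a set \<Rightarrow> 'a set" where
  "bridge V E h1 h2 = {x \<in> V. \<forall>h \<in> bridge_set V E h1 h2. x \<in> h}"

definition Uhs :: "'a set \<Rightarrow> ('a \<Rightarrow> 'a \<Rightarrow> bool) \<Rightarrow> 'a \<Rightarrow> 'a set set" where
  "Uhs V E v = {h \<in> halfspaces V E. v \<in> h}"

definition hinterval :: "'a set \<Rightarrow> ('a \<Rightarrow> 'a \<Rightarrow> bool) \<Rightarrow> 'a \<Rightarrow> 'a \<Rightarrow> 'a set" where
  "hinterval V E v w = {m \<in> V. Uhs V E v \<inter> Uhs V E w \<subseteq> Uhs V E m}"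

end

theory Submission
  imports Defs
begin


lemma walk_0: "walk E u v 0 \<longleftrightarrow> u = v"
  unfolding walk_def by auto

lemma walk_1: "E u v \<Longrightarrow> walk E u v 1"
  unfolding walk_def by (rule exI[of _ "\<lambda>i. if i = 0 then u else v"]) auto

lemma walk_trans: "walk E u v m \<Longrightarrow> walk E v w n \<Longrightarrow> walk E u w (m+n)"
proof -
  assume "walk E u v m" "walk E v w n"
  then obtain p q where p: "p 0 = u" "p m = v" "\<forall>i<m. E (p i) (p (Suc i))"
    and q: "q 0 = v" "q n = w" "\<forall>i<n. E (q i) (q (Suc i))" unfolding walk_def by blast
  define r where "r = (\<lambda>i. if i \<le> m then p i else q (i - m))"
  have "\<forall>i<m+n. E (r i) (r (Suc i))"
  proof (intro allI impI)
    fix i assume i: "i < m + n"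
    show "E (r i) (r (Suc i))"
    proof (cases "i < m")
      case True then show ?thesis using p by (auto simp: r_def)
    next
      case False
      then have "i - m < n" "Suc i - m = Suc (i - m)" using i by auto
      then show ?thesis using q p False by (cases "i = m") (auto simp: r_def)
    qed
  qed
  moreover have "r 0 = u" "r (m+n) = w" using p q by (auto simp: r_def)
  ultimately show ?thesis unfolding walk_def by blast
qed

lemma walk_rev: "(\<forall>a b. E a b \<longrightarrow> E b a) \<Longrightarrow> walk E u v n \<Longrightarrow> walk E v u n"
proof -
  assume s: "\<forall>a b. E a b \<longrightarrow> E b a" and "walk E u v n"
  then obtain p where p: "p 0 = u" "p n = v" "\<forall>i<n. E (p i) (p (Suc i))" unfolding walk_def by blast
  define r where "r = (\<lambda>i. p (n - i))"
  have "\<forall>i<n. E (r i) (r (Suc i))"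
  proof (intro allI impI)
    fix i assume i: "i < n"
    then have "E (p (n - Suc i)) (p (Suc (n - Suc i)))" using p by auto
    moreover have "Suc (n - Suc i) = n - i" using i by auto
    ultimately show "E (r i) (r (Suc i))" using s by (auto simp: r_def)
  qed
  moreover have "r 0 = v" "r n = u" using p by (auto simp: r_def)
  ultimately show ?thesis unfolding walk_def by blast
qed

lemma walk_Suc: "walk E u v (Suc n) \<Longrightarrow> \<exists>w. E u w \<and> walk E w v n"
proof -
  assume "walk E u v (Suc n)"
  then obtain p where p: "p 0 = u" "p (Suc n) = v" "\<forall>i<Suc n. E (p i) (p (Suc i))" unfolding walk_def by blast
  have "E u (p 1)" using p by auto
  moreover have "walk E (p 1) v n" unfolding walk_def
    by (rule exI[of _ "\<lambda>i. p (Suc i)"]) (use p in auto)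
  ultimately show ?thesis by blast
qed

locale mg = fixes V :: "'a set" and E assumes mg: "median_graph V E"
begin

abbreviation d where "d \<equiv> gdist E"

lemma E_V: "E u v \<Longrightarrow> u \<in> V \<and> v \<in> V" using mg unfolding median_graph_def by blast
lemma E_sym: "E u v \<Longrightarrow> E v u" using mg unfolding median_graph_def by blast
lemma E_irr: "\<not> E u u" using mg unfolding median_graph_def by blast
lemma conn: "u\<in>V \<Longrightarrow> v\<in>V \<Longrightarrow> \<exists>n. walk E u v n" using mg unfolding median_graph_def by blast
lemma med: "u\<in>V \<Longrightarrow> v\<in>V \<Longrightarrow> w\<in>V \<Longrightarrow> \<exists>!m. m \<in> ginterval E V u v \<and> m \<in> ginterval E V v w \<and> m \<in> ginterval E V u w"
  using mg unfolding median_graph_def by blast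

lemma d_walk: "u\<in>V \<Longrightarrow> v\<in>V \<Longrightarrow> walk E u v (d u v)"
  unfolding gdist_def using conn by (metis LeastI_ex)
lemma d_le: "walk E u v n \<Longrightarrow> d u v \<le> n"
  unfolding gdist_def by (rule Least_le)
lemma d_refl[simp]: "d u u = 0"
  using d_le[of u u 0] walk_0[of E u u] by auto
lemma d_zero: "u\<in>V \<Longrightarrow> v\<in>V \<Longrightarrow> d u v = 0 \<Longrightarrow> u = v"
  using d_walk walk_0 by metis
lemma d_sym: "u\<in>V \<Longrightarrow> v\<in>V \<Longrightarrow> d u v = d v u"
proof -
  assume "u\<in>V" "v\<in>V"
  have s: "\<forall>a b. E a b \<longrightarrow> E b a" using E_sym by blast
  have "d u v \<le> d v u" using d_le walk_rev[OF s d_walk[OF \<open>v\<in>V\<close> \<open>u\<in>V\<close>]] by blast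
  moreover have "d v u \<le> d u v" using d_le walk_rev[OF s d_walk[OF \<open>u\<in>V\<close> \<open>v\<in>V\<close>]] by blast
  ultimately show ?thesis by simp
qed
lemma d_tri: "u\<in>V \<Longrightarrow> v\<in>V \<Longrightarrow> w\<in>V \<Longrightarrow> d u w \<le> d u v + d v w"
  using d_le walk_trans d_walk by metis
lemma d_edge: "E u v \<Longrightarrow> d u v = 1"
proof -
  assume e: "E u v"
  have "d u v \<le> 1" using d_le walk_1[of E u v, OF e] by blast
  moreover have "d u v \<noteq> 0" using d_zero E_V[OF e] E_irr e by metis
  ultimately show ?thesis by simp
qed
lemma d_edge2: "E u v \<Longrightarrow> d v u = 1" using d_edge E_sym by blast

lemma d_one: "u\<in>V \<Longrightarrow> v\<in>V \<Longrightarrow> d u v = 1 \<Longrightarrow> E u v"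
  using d_walk walk_Suc walk_0 by (metis One_nat_def)
lemma d_step: "u\<in>V \<Longrightarrow> v\<in>V \<Longrightarrow> d u v > 0 \<Longrightarrow> \<exists>w. E u w \<and> d w v + 1 = d u v"
proof -
  assume uv: "u\<in>V" "v\<in>V" "d u v > 0"
  then obtain n where n: "d u v = Suc n" by (cases "d u v") auto
  then obtain w where w: "E u w" "walk E w v n" using walk_Suc d_walk uv by metis
  have "d w v \<le> n" using d_le w by blast
  moreover have "d u v \<le> d u w + d w v" using d_tri uv E_V w by blast
  ultimately show ?thesis using w d_edge n by force
qed

lemma bip: "E u v \<Longrightarrow> z \<in> V \<Longrightarrow> d z u \<noteq> d z v"
proof
  assume e: "E u v" and z: "z \<in> V" and eq: "d z u = d z v"
  have uv: "u \<in> V" "v \<in> V" using E_V e by auto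
  obtain m where m: "m \<in> ginterval E V z u" "m \<in> ginterval E V u v" "m \<in> ginterval E V z v"
    using med[OF z uv] by blast
  have "d u m + d m v = 1" "m \<in> V" using m(2) d_edge[OF e] unfolding ginterval_def by auto
  then have "d u m = 0 \<or> d m v = 0" by arith
  then have "m = u \<or> m = v" using d_zero uv \<open>m\<in>V\<close> by metis
  then show False using m eq d_edge[OF e] d_edge[OF E_sym[OF e]] unfolding ginterval_def by auto
qed

lemma edge_diff: "E u v \<Longrightarrow> z \<in> V \<Longrightarrow> d z v = d z u + 1 \<or> d z u = d z v + 1"
proof -
  assume e: "E u v" and z: "z \<in> V"
  have uv: "u \<in> V" "v \<in> V" using E_V e by auto
  have "d z v \<le> d z u + d u v" "d z u \<le> d z v + d v u" using d_tri z uv by auto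
  then show ?thesis using bip[OF e z] d_edge[OF e] d_edge[OF E_sym[OF e]] by arith
qed

end

context mg begin

definition W where "W u v = {x \<in> V. d x u < d x v}"

lemma hs_eq: "halfspaces V E = {W u v | u v. E u v}"
  unfolding halfspaces_def W_def using E_V by blast

lemma W_compl: "E u v \<Longrightarrow> V - W u v = W v u"
  unfolding W_def using bip by fastforce

lemma W_sub: "W u v \<subseteq> V" unfolding W_def by auto

lemma square: "E u v \<Longrightarrow> E v v' \<Longrightarrow> E v' u' \<Longrightarrow> E u' u \<Longrightarrow> u \<noteq> v' \<Longrightarrow> v \<noteq> u' \<Longrightarrow> W u v \<subseteq> W u' v'"
proof
  fix z assume e: "E u v" "E v v'" "E v' u'" "E u' u" and ne: "u \<noteq> v'" "v \<noteq> u'" and zW: "z \<in> W u v"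
  have V: "u \<in> V" "v \<in> V" "u' \<in> V" "v' \<in> V" using E_V e by auto
  have z: "z \<in> V" "d z u < d z v" using zW unfolding W_def by auto
  show "z \<in> W u' v'"
  proof (rule ccontr)
    assume "z \<notin> W u' v'"
    then have lt: "d z v' < d z u'" using bip[OF e(3) z(1)] z unfolding W_def by auto
    have a1: "d z v = d z u + 1" using edge_diff[OF e(1) z(1)] z by auto
    have a2: "d z u' = d z u + 1 \<or> d z u = d z u' + 1" using edge_diff[OF E_sym[OF e(4)] z(1)] by auto
    have a3: "d z u' = d z v' + 1" using edge_diff[OF e(3) z(1)] lt by auto
    have a4: "d z v' = d z v + 1 \<or> d z v = d z v' + 1" using edge_diff[OF e(2) z(1)] by auto
    have b1: "d z u' = d z u + 1" "d z v' = d z u" using a1 a2 a3 a4 by arith+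
    have "d v u' \<le> d v u + d u u'" using d_tri V by auto
    then have "d v u' \<le> 2" using d_edge d_edge2 e by auto
    moreover have "d v u' \<noteq> 0" using d_zero V ne by auto
    moreover have "d v u' \<noteq> 1"
    proof
      assume "d v u' = 1"
      then have "E v u'" using d_one V by auto
      then show False using bip[OF _ V(1), of v u'] d_edge e E_sym by metis
    qed
    ultimately have d2: "d v u' = 2" by arith
    have s: "d u' z = d z u'" "d v z = d z v" "d u z = d z u" "d v' z = d z v'" using d_sym[OF V(3) z(1)] d_sym[OF V(2) z(1)] d_sym[OF V(1) z(1)] d_sym[OF V(4) z(1)] by simp_all
    have "u \<in> ginterval E V v u' \<and> u \<in> ginterval E V u' z \<and> u \<in> ginterval E V v z"
      unfolding ginterval_def using V d2 s b1 a1 d_edge d_edge2 e by auto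
    moreover have "v' \<in> ginterval E V v u' \<and> v' \<in> ginterval E V u' z \<and> v' \<in> ginterval E V v z"
      unfolding ginterval_def using V d2 s b1 a1 d_edge d_edge2 e by auto
    ultimately have "u = v'" using med[OF V(2) V(3) z(1)] by blast
    then show False using ne by simp
  qed
qed

lemma theta_aux: "d x u = k \<Longrightarrow> E u v \<Longrightarrow> E x x' \<Longrightarrow> x \<in> W u v \<Longrightarrow> x' \<in> W v u \<Longrightarrow> W x x' = W u v"
proof (induction k arbitrary: u v x x' rule: less_induct)
  case (less k)
  have V: "u \<in> V" "v \<in> V" "x \<in> V" "x' \<in> V" using E_V less.prems by auto
  have dx: "d x v = k + 1" using edge_diff[OF less.prems(2) V(3)] less.prems unfolding W_def by auto
  have dx'1: "d x' v < d x' u" using less.prems unfolding W_def by auto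
  have "d x v \<le> d x x' + d x' v" using d_tri V by auto
  moreover have "d x' u \<le> d x' x + d x u" using d_tri V by auto
  moreover have "d x x' = 1" "d x' x = 1" using d_edge d_edge2 less.prems by auto
  moreover have "d x' u = d x' v + 1" using edge_diff[OF less.prems(2) V(4)] dx'1 by auto
  ultimately have dx': "d x' u = k + 1" "d x' v = k" using dx less.prems(1) by arith+
  show ?case
  proof (cases "k = 0")
    case True
    then have "x = u" using d_zero V less.prems by auto
    moreover have "x' = v" using d_zero V dx' True by auto
    ultimately show ?thesis by simp
  next
    case False
    then obtain u' where u': "E u u'" "d u' x + 1 = d u x" using d_step[OF V(1) V(3)] d_sym V less.prems by auto
    have Vu': "u' \<in> V" using E_V u' by auto
    have du'x: "d x u' = k - 1" using u' d_sym V Vu' less.prems by auto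
    have "d x v \<le> d x u' + d u' v" "d u' v \<le> d u' u + d u v" using d_tri V Vu' by auto
    then have du'v: "d u' v = 2" using dx du'x d_edge d_edge2 u' less.prems(2) False by fastforce
    have "d x' u \<le> d x' u' + d u' u" "d x' u' \<le> d x' x + d x u'" using d_tri V Vu' by auto
    then have du'x': "d u' x' = k" using d_sym[OF Vu' V(4)] dx' du'x d_edge d_edge2 u' less.prems(3) False by fastforce
    obtain v' where v': "v' \<in> ginterval E V u' v" "v' \<in> ginterval E V v x'" "v' \<in> ginterval E V u' x'"
      using med[OF Vu' V(2) V(4)] by blast
    have Vv': "v' \<in> V" using v' unfolding ginterval_def by auto
    have dd: "d u' v' + d v' v = 2" "d v v' + d v' x' = k" "d u' v' + d v' x' = k"
      using v' du'v du'x' d_sym[OF V(2) V(4)] dx' unfolding ginterval_def by auto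
    have "d v v' = d v' v" using d_sym V Vv' by auto
    then have dd2: "d u' v' = 1" "d v' v = 1" "d v' x' = k - 1" using dd False by arith+
    have e1: "E u' v'" "E v' v" using d_one dd2 V Vu' Vv' by auto
    have ne: "u \<noteq> v'" using dd2 dx' d_sym V Vv' False by fastforce
    have ne2: "v \<noteq> u'" using du'v by auto
    have sq1: "W u v \<subseteq> W u' v'" using square[OF less.prems(2) E_sym[OF e1(2)] E_sym[OF e1(1)] E_sym[OF u'(1)] ne ne2] .
    have sq2: "W u' v' \<subseteq> W u v" using square[OF e1(1) e1(2) E_sym[OF less.prems(2)] u'(1)] ne ne2 by auto
    have "d x v' \<ge> k" proof -
      have "d x v \<le> d x v' + d v' v" using d_tri V Vv' by auto
      then show ?thesis using dx dd2 by auto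
    qed
    then have xW: "x \<in> W u' v'" using du'x V False unfolding W_def by auto
    have "d x' v' = k - 1" using dd2 d_sym V Vv' by auto
    moreover have "d x' u' = k" using du'x' d_sym V Vu' by auto
    ultimately have x'W: "x' \<in> W v' u'" using V False unfolding W_def by auto
    have "W x x' = W u' v'" using less.IH[OF _ du'x e1(1) less.prems(3) xW x'W] False less.prems(1) by auto
    then show ?thesis using sq1 sq2 by auto
  qed
qed

lemma theta: "E u v \<Longrightarrow> E x x' \<Longrightarrow> x \<in> W u v \<Longrightarrow> x' \<in> W v u \<Longrightarrow> W x x' = W u v"
  using theta_aux by blast

lemma conv1: "E u v \<Longrightarrow> x \<in> W u v \<Longrightarrow> y \<in> W u v \<Longrightarrow> E x x' \<Longrightarrow> d x' y + 1 = d x y \<Longrightarrow> x' \<in> W u v"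
proof (rule ccontr)
  assume a: "E u v" "x \<in> W u v" "y \<in> W u v" "E x x'" "d x' y + 1 = d x y" "x' \<notin> W u v"
  have V: "x \<in> V" "x' \<in> V" "y \<in> V" using a(2,3) E_V[OF a(4)] W_sub by blast+
  then have "x' \<in> W v u" using V(2) a(6) W_compl[OF a(1)] by blast
  then have "W x x' = W u v" using theta[OF a(1) a(4) a(2)] by blast
  then have "d y x < d y x'" using a unfolding W_def by auto
  then show False using a(5) d_sym[OF V(3) V(1)] d_sym[OF V(3) V(2)] by simp
qed

lemma conv_aux: "d x m = k \<Longrightarrow> E u v \<Longrightarrow> x \<in> W u v \<Longrightarrow> y \<in> W u v \<Longrightarrow> m \<in> V \<Longrightarrow> d x m + d m y = d x y \<Longrightarrow> m \<in> W u v"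
proof (induction k arbitrary: x)
  case 0
  then show ?case using d_zero W_sub by blast
next
  case (Suc k)
  have V: "x \<in> V" "y \<in> V" using Suc.prems W_sub by auto
  obtain x' where x': "E x x'" "d x' m + 1 = d x m" using d_step[OF V(1) Suc.prems(5)] Suc.prems by auto
  have Vx': "x' \<in> V" using E_V x' by auto
  have "d x' y \<le> d x' m + d m y" "d x y \<le> d x x' + d x' y" using d_tri V Vx' Suc.prems by auto
  then have "d x' y + 1 = d x y" using x' d_edge Suc.prems by auto
  then have "x' \<in> W u v" using conv1 Suc.prems x' by blast
  then show ?case using Suc.IH[of x'] x' Suc.prems \<open>d x' y + 1 = d x y\<close> by auto
qed

lemma convex: "h \<in> halfspaces V E \<Longrightarrow> x \<in> h \<Longrightarrow> y \<in> h \<Longrightarrow> m \<in> ginterval E V x y \<Longrightarrow> m \<in> h"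
  unfolding hs_eq ginterval_def using conv_aux by blast

lemma hs_compl: "h \<in> halfspaces V E \<Longrightarrow> V - h \<in> halfspaces V E"
  unfolding hs_eq using W_compl E_sym by blast

lemma hs_sub: "h \<in> halfspaces V E \<Longrightarrow> h \<subseteq> V"
  unfolding hs_eq using W_sub by blast

lemma separate: "x \<in> V \<Longrightarrow> y \<in> V \<Longrightarrow> x \<noteq> y \<Longrightarrow> \<exists>h \<in> halfspaces V E. x \<in> h \<and> y \<notin> h"
proof -
  assume a: "x \<in> V" "y \<in> V" "x \<noteq> y"
  then have "d x y > 0" using d_zero by fastforce
  then obtain x' where x': "E x x'" "d x' y + 1 = d x y" using d_step a by blast
  have "x' \<in> V" using E_V x' by auto
  then have "x \<in> W x x'" "y \<notin> W x x'" using a x'(2) d_edge[OF x'(1)] d_sym[OF a(2) a(1)] d_sym[OF a(2) \<open>x' \<in> V\<close>] unfolding W_def by auto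
  then show ?thesis unfolding hs_eq using x' by blast
qed

lemma hs_nonempty: "h \<in> halfspaces V E \<Longrightarrow> h \<noteq> {}"
  unfolding hs_eq W_def using E_V d_edge by fastforce

end

context mg begin

lemma minpair:
  assumes a: "a \<in> halfspaces V E" and b: "b \<in> halfspaces V E" and p: "p \<in> a" and q: "q \<in> b"
    and mn: "\<forall>a'\<in>a. \<forall>b'\<in>b. d p q \<le> d a' b'"
    and h: "h \<in> halfspaces V E" "p \<in> h" "q \<notin> h"
  shows "a \<subseteq> h"
proof
  fix y assume y: "y \<in> a"
  show "y \<in> h"
  proof (rule ccontr)
    assume yh: "y \<notin> h"
    have V: "p \<in> V" "q \<in> V" "y \<in> V" using hs_sub a b p q y by blast+
    obtain m where m: "m \<in> ginterval E V p q" "m \<in> ginterval E V q y" "m \<in> ginterval E V p y"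
      using med[OF V] by blast
    have ma: "m \<in> a" using convex[OF a p y m(3)] .
    have "m \<in> V - h" using convex[OF hs_compl[OF h(1)] _ _ m(2)] V yh h(3) by blast
    then have "m \<noteq> p" using h(2) by blast
    then have "d p m \<noteq> 0" using d_zero V m(1) unfolding ginterval_def by blast
    moreover have "d p m + d m q = d p q" using m(1) unfolding ginterval_def by blast
    moreover have "d p q \<le> d m q" using mn ma q by blast
    ultimately show False by arith
  qed
qed

lemma main:
  assumes H1: "h1 \<in> halfspaces V E" and H2: "h2 \<in> halfspaces V E"
    and sub: "h1 \<subset> V - h2" and ss: "strongly_separated V E h1 h2"
  shows "\<exists>x1 x2. h1 \<inter> bridge V E h1 h2 = {x1} \<and> h2 \<inter> bridge V E h1 h2 = {x2} \<and>
           bridge V E h1 h2 = hinterval V E x1 x2 \<and>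
           {h \<in> halfspaces V E. \<exists>p\<in>bridge V E h1 h2. \<exists>q\<in>bridge V E h1 h2. p \<in> h \<and> q \<in> V - h}
           = {h \<in> halfspaces V E. (h1 \<subseteq> h \<and> h \<subseteq> V - h2) \<or> (h1 \<subseteq> V - h \<and> V - h \<subseteq> V - h2)}"
proof -
  let ?H = "halfspaces V E"
  have V1: "h1 \<subseteq> V" and V2: "h2 \<subseteq> V" using hs_sub H1 H2 by auto
  have dj: "h1 \<inter> h2 = {}" using sub by blast
  have "\<exists>n. \<exists>a\<in>h1. \<exists>b\<in>h2. d a b = n" using hs_nonempty H1 H2 by blast
  then obtain x1 x2 where x: "x1 \<in> h1" "x2 \<in> h2" and
    n0: "d x1 x2 = (LEAST n. \<exists>a\<in>h1. \<exists>b\<in>h2. d a b = n)"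
    by (smt (verit, del_insts) LeastI_ex)
  have mn: "\<forall>a\<in>h1. \<forall>b\<in>h2. d x1 x2 \<le> d a b"
    using n0 by (metis (mono_tags, lifting) Least_le)
  have xV: "x1 \<in> V" "x2 \<in> V" using x V1 V2 by auto
  have mn2: "\<forall>a\<in>h2. \<forall>b\<in>h1. d x2 x1 \<le> d a b"
  proof (intro ballI)
    fix a b assume "a \<in> h2" "b \<in> h1"
    then show "d x2 x1 \<le> d a b" using mn d_sym[OF xV(1) xV(2)] d_sym[of a b] V1 V2 by (metis subsetD)
  qed
  have sepA: "h1 \<subseteq> h \<and> h \<subseteq> V - h2" if "h \<in> ?H" "x1 \<in> h" "x2 \<notin> h" for h
  proof -
    have "h1 \<subseteq> h" using minpair[OF H1 H2 x mn that] .
    moreover have "h2 \<subseteq> V - h" using minpair[OF H2 H1 x(2) x(1) mn2 hs_compl[OF that(1)]] that xV by blast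
    ultimately show ?thesis using hs_sub[OF that(1)] by blast
  qed
  have sepB: "h1 \<subseteq> V - h \<and> V - h \<subseteq> V - h2" if "h \<in> ?H" "x2 \<in> h" "x1 \<notin> h" for h
    using sepA[OF hs_compl[OF that(1)]] that xV by blast
  have P1: "x1 \<in> h \<and> x2 \<in> h" if "h \<in> bridge_set V E h1 h2" for h
  proof -
    have hH: "h \<in> ?H" and c: "(hatsub V h1 h \<and> transverse V h h2) \<or> (hatsub V h2 h \<and> transverse V h h1) \<or>
      (hatsub V h1 h \<and> hatsub V h2 h)" using that unfolding bridge_set_def by auto
    have hV: "h \<subseteq> V" using hs_sub hH by blast
    show ?thesis
    proof
      show "x1 \<in> h"
      proof (rule ccontr)
        assume n: "x1 \<notin> h"
        have h1n: "\<not> h1 \<subset> h" using n x by blast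
        have h2a: "x2 \<in> h \<Longrightarrow> h1 \<subseteq> V - h" using sepB[OF hH _ n] by blast
        from c show False
        proof (elim disjE conjE)
          assume "hatsub V h1 h" "transverse V h h2"
          then have "V - h1 \<subset> h" "(V - h) \<inter> h2 \<noteq> {}" using h1n unfolding hatsub_def transverse_def by auto
          then show False using dj V2 by blast
        next
          assume a: "hatsub V h2 h" "transverse V h h1"
          then have "h \<inter> h1 \<noteq> {}" unfolding transverse_def by auto
          moreover have "h2 \<subset> h \<or> V - h2 \<subset> h" using a unfolding hatsub_def by auto
          ultimately show False using h2a x n sub by blast
        next
          assume "hatsub V h1 h" "hatsub V h2 h"
          then have a: "V - h1 \<subset> h" using h1n unfolding hatsub_def by auto
          then have "x2 \<in> h" using x dj V2 by blast
          then show False using h2a a hV by blast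
        qed
      qed
    next
      show "x2 \<in> h"
      proof (rule ccontr)
        assume n: "x2 \<notin> h"
        have h2n: "\<not> h2 \<subset> h" using n x by blast
        have h1a: "x1 \<in> h \<Longrightarrow> h \<subseteq> V - h2" using sepA[OF hH _ n] by blast
        from c show False
        proof (elim disjE conjE)
          assume a: "hatsub V h1 h" "transverse V h h2"
          then have "h \<inter> h2 \<noteq> {}" unfolding transverse_def by auto
          moreover have "h1 \<subset> h \<or> V - h1 \<subset> h" using a unfolding hatsub_def by auto
          ultimately show False using h1a x n dj V2 by blast
        next
          assume "hatsub V h2 h" "transverse V h h1"
          then have "V - h2 \<subset> h" "(V - h) \<inter> h1 \<noteq> {}" using h2n unfolding hatsub_def transverse_def by auto
          then show False using sub by blast
        next
          assume "hatsub V h1 h" "hatsub V h2 h"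
          then have a: "V - h2 \<subset> h" using h2n unfolding hatsub_def by auto
          then have "x1 \<in> h" using x sub by blast
          then show False using h1a a hV by blast
        qed
      qed
    qed
  qed
  have P2: "h \<in> bridge_set V E h1 h2" if hH: "h \<in> ?H" and xh: "x1 \<in> h" "x2 \<in> h" for h
  proof -
    have hV: "h \<subseteq> V" using hs_sub hH by blast
    have t1: "hatsub V h1 h \<or> transverse V h h1"
    proof (cases "(V - h) \<inter> h1 = {}")
      case True
      then have "h1 \<subset> h" using V1 xh x dj by blast
      then show ?thesis unfolding hatsub_def by blast
    next
      case F1: False
      show ?thesis
      proof (cases "(V - h) \<inter> (V - h1) = {}")
        case True
        then have "V - h1 \<subset> h" using hV xh x by blast
        then show ?thesis unfolding hatsub_def by blast
      next
        case False
        moreover have "h \<inter> h1 \<noteq> {}" "h \<inter> (V - h1) \<noteq> {}" using xh x dj V2 by blast+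
        ultimately show ?thesis using F1 unfolding transverse_def by blast
      qed
    qed
    have t2: "hatsub V h2 h \<or> transverse V h h2"
    proof (cases "(V - h) \<inter> h2 = {}")
      case True
      then have "h2 \<subset> h" using V2 xh x dj by blast
      then show ?thesis unfolding hatsub_def by blast
    next
      case F1: False
      show ?thesis
      proof (cases "(V - h) \<inter> (V - h2) = {}")
        case True
        then have "V - h2 \<subset> h" using hV xh x by blast
        then show ?thesis unfolding hatsub_def by blast
      next
        case False
        moreover have "h \<inter> h2 \<noteq> {}" "h \<inter> (V - h2) \<noteq> {}" using xh x dj V1 by blast+
        ultimately show ?thesis using F1 unfolding transverse_def by blast
      qed
    qed
    have "\<not> (transverse V h h1 \<and> transverse V h h2)" using ss hH unfolding strongly_separated_def by blast
    then show ?thesis using t1 t2 hH unfolding bridge_set_def by blast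
  qed
  have Br: "bridge V E h1 h2 = hinterval V E x1 x2"
  proof
    show "bridge V E h1 h2 \<subseteq> hinterval V E x1 x2"
      unfolding bridge_def hinterval_def Uhs_def using P2 by blast
    show "hinterval V E x1 x2 \<subseteq> bridge V E h1 h2"
      unfolding bridge_def hinterval_def Uhs_def using P1 bridge_set_def by blast
  qed
  have hint: "m \<in> h" if "m \<in> hinterval V E x1 x2" "h \<in> ?H" "x1 \<in> h" "x2 \<in> h" for m h
    using that unfolding hinterval_def Uhs_def by blast
  have hintV: "m \<in> V" if "m \<in> hinterval V E x1 x2" for m
    using that unfolding hinterval_def by blast
  have x1B: "x1 \<in> hinterval V E x1 x2" "x2 \<in> hinterval V E x1 x2"
    unfolding hinterval_def Uhs_def using xV by auto
  have B1: "h1 \<inter> hinterval V E x1 x2 = {x1}"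
  proof -
    have "y = x1" if y: "y \<in> h1" "y \<in> hinterval V E x1 x2" for y
    proof (rule ccontr)
      assume ne: "y \<noteq> x1"
      obtain k where k: "k \<in> ?H" "y \<in> k" "x1 \<notin> k" using separate[OF hintV[OF y(2)] xV(1) ne] by blast
      show False
      proof (cases "x2 \<in> k")
        case True
        then show False using sepB[OF k(1) True k(3)] y k by blast
      next
        case False
        then show False using hint[OF y(2) hs_compl[OF k(1)]] xV k by blast
      qed
    qed
    then show ?thesis using x1B x by blast
  qed
  have B2: "h2 \<inter> hinterval V E x1 x2 = {x2}"
  proof -
    have "y = x2" if y: "y \<in> h2" "y \<in> hinterval V E x1 x2" for y
    proof (rule ccontr)
      assume ne: "y \<noteq> x2"
      obtain k where k: "k \<in> ?H" "y \<in> k" "x2 \<notin> k" using separate[OF hintV[OF y(2)] xV(2) ne] by blast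
      show False
      proof (cases "x1 \<in> k")
        case True
        then show False using sepA[OF k(1) True k(3)] y k by blast
      next
        case False
        then show False using hint[OF y(2) hs_compl[OF k(1)]] xV k by blast
      qed
    qed
    then show ?thesis using x1B x by blast
  qed
  have D: "{h \<in> ?H. \<exists>p\<in>hinterval V E x1 x2. \<exists>q\<in>hinterval V E x1 x2. p \<in> h \<and> q \<in> V - h}
           = {h \<in> ?H. (h1 \<subseteq> h \<and> h \<subseteq> V - h2) \<or> (h1 \<subseteq> V - h \<and> V - h \<subseteq> V - h2)}"
  proof
    show "{h \<in> ?H. \<exists>p\<in>hinterval V E x1 x2. \<exists>q\<in>hinterval V E x1 x2. p \<in> h \<and> q \<in> V - h}
      \<subseteq> {h \<in> ?H. (h1 \<subseteq> h \<and> h \<subseteq> V - h2) \<or> (h1 \<subseteq> V - h \<and> V - h \<subseteq> V - h2)}"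
    proof (rule subsetI)
      fix h assume "h \<in> {h \<in> ?H. \<exists>p\<in>hinterval V E x1 x2. \<exists>q\<in>hinterval V E x1 x2. p \<in> h \<and> q \<in> V - h}"
      then obtain p q where hH: "h \<in> ?H" and p: "p \<in> hinterval V E x1 x2" "p \<in> h"
        and q: "q \<in> hinterval V E x1 x2" "q \<in> V" "q \<notin> h" by blast
      have "\<not> (x1 \<in> h \<and> x2 \<in> h)" using hint[OF q(1) hH] q by blast
      moreover have "\<not> (x1 \<notin> h \<and> x2 \<notin> h)" using hint[OF p(1) hs_compl[OF hH]] p xV by blast
      ultimately have "h1 \<subseteq> h \<and> h \<subseteq> V - h2 \<or> h1 \<subseteq> V - h \<and> V - h \<subseteq> V - h2"
        using sepA[OF hH] sepB[OF hH] by blast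
      then show "h \<in> {h \<in> ?H. (h1 \<subseteq> h \<and> h \<subseteq> V - h2) \<or> (h1 \<subseteq> V - h \<and> V - h \<subseteq> V - h2)}"
        using hH by blast
    qed
    show "{h \<in> ?H. (h1 \<subseteq> h \<and> h \<subseteq> V - h2) \<or> (h1 \<subseteq> V - h \<and> V - h \<subseteq> V - h2)}
      \<subseteq> {h \<in> ?H. \<exists>p\<in>hinterval V E x1 x2. \<exists>q\<in>hinterval V E x1 x2. p \<in> h \<and> q \<in> V - h}"
    proof (safe)
      fix h assume hH: "h \<in> ?H" and c: "h1 \<subseteq> h" "h \<subseteq> V - h2"
      then show "\<exists>p\<in>hinterval V E x1 x2. \<exists>q\<in>hinterval V E x1 x2. p \<in> h \<and> q \<in> V - h"
        using x1B x xV by blast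
    next
      fix h assume hH: "h \<in> ?H" and c: "h1 \<subseteq> V - h" "V - h \<subseteq> V - h2"
      then show "\<exists>p\<in>hinterval V E x1 x2. \<exists>q\<in>hinterval V E x1 x2. p \<in> h \<and> q \<in> V - h"
        using x1B x xV by blast
    qed
  qed
  show ?thesis using B1 B2 Br D by metis
qed

end

theorem corollary3:
  fixes V :: "'a set" and E :: "'a \<Rightarrow> 'a \<Rightarrow> bool" and h1 h2 :: "'a set"
  assumes "median_graph V E" and "finite_dim V E"
    and "h1 \<in> halfspaces V E" and "h2 \<in> halfspaces V E"
    and "h1 \<subset> V - h2"
    and "strongly_separated V E h1 h2"
  shows "\<exists>x1 x2. h1 \<inter> bridge V E h1 h2 = {x1} \<and> h2 \<inter> bridge V E h1 h2 = {x2} \<and>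
           bridge V E h1 h2 = hinterval V E x1 x2 \<and>
           {h \<in> halfspaces V E. \<exists>p\<in>bridge V E h1 h2. \<exists>q\<in>bridge V E h1 h2. p \<in> h \<and> q \<in> V - h}
           = {h \<in> halfspaces V E. (h1 \<subseteq> h \<and> h \<subseteq> V - h2) \<or> (h1 \<subseteq> V - h \<and> V - h \<subseteq> V - h2)}"
proof -
  interpret mg V E by (rule mg.intro) (rule assms(1))
  show ?thesis using main[OF assms(3) assms(4) assms(5) assms(6)] .
qed

end
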